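(* Let $\mathbbm{k}$ be a field and let $f_1, f_2, \ldots, f_m \in \mathbbm{k}[x_1, \dots, x_n]$. Let $$Z(f_1, \ldots, f_m) := \{X \in \mathbbm{k}^{n \times n} \mid (H_{f_i}X)^T = H_{f_i}X \text{ for all } 1 \le i \le m\},$$ where $H_{f_i}$ is the Hessian matrix of $f_i$, and for $X, Y \in Z(f_1,\ldots,f_m)$ put $X \odot Y = \frac{1}{2}(XY + YX)$. Then: (1) $(Z(f_1, \ldots, f_m), \odot)$ is a special Jordan algebra; more precisely, it is closed under $\odot$ and is a Jordan subalgebra of $(\mathbbm{k}^{n\times n})^+$. (2) If the coefficients of $f_1, \ldots, f_m$ are generic and at least one of the $f_i$ has degree not less than $3$, then $(Z(f_1, \ldots, f_m), \odot) \cong \mathbbm{k}$.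
   Context: The Hessian matrix $H_f$ of $f\in\mathbbm{k}[x_1,\dots,x_n]$ is the $n\times n$ matrix of second partial derivatives $\partial^2 f/\partial x_i\partial x_j$ (with entries in the polynomial ring); the condition $(H_fX)^T=H_fX$ is an identity of matrices over $\mathbbm{k}[x_1,\dots,x_n]$. A Jordan algebra is a vector space with a bilinear product $\odot$ satisfying $X\odot Y=Y\odot X$ and $(X^2\odot Y)\odot X = X^2\odot(Y\odot X)$. For an associative algebra $A$, $A^+$ denotes the Jordan algebra on $A$ with product $X\odot Y=\frac12(XY+YX)$; a Jordan algebra is special if it is isomorphic to a Jordan subalgebra of some $A^+$. "Generic" is meant in the algebro-geometric sense: there is a nonzero polynomial in the coefficients of $f_1,\dots,f_m$ (for fixed degrees) such that the conclusion holds whenever this polynomial does not vanish at the coefficients. *)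

theory Defs
  imports "HOL-Analysis.Analysis" "HOL-Library.Poly_Mapping"
begin

text \<open>Multivariate polynomials over 'a in the variables indexed by the finite type 'n
  (so n = CARD('n)): finitely supported maps from monomials (exponent vectors) to
  coefficients, with the convolution product of HOL-Library.Poly_Mapping.\<close>

type_synonym ('n, 'a) mpoly = "('n \<Rightarrow>\<^sub>0 nat) \<Rightarrow>\<^sub>0 'a"

definition mconst :: "'a::zero \<Rightarrow> ('n, 'a) mpoly" where
  "mconst c = Poly_Mapping.single 0 c"

definition pdiff :: "'n \<Rightarrow> ('n, 'a::comm_ring_1) mpoly \<Rightarrow> ('n, 'a) mpoly" where
  "pdiff i p = Abs_poly_mapping
     (\<lambda>\<alpha>::'n \<Rightarrow>\<^sub>0 nat. of_nat (Poly_Mapping.lookup \<alpha> i + 1) * Poly_Mapping.lookup p (\<alpha> + Poly_Mapping.single i (1::nat)))"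

definition hessian :: "('n::finite, 'a::comm_ring_1) mpoly \<Rightarrow> (('n, 'a) mpoly) ^'n ^'n" where
  "hessian f = (\<chi> i j. pdiff i (pdiff j f))"

definition const_mat :: "'a::zero ^'n ^'n \<Rightarrow> (('n, 'a) mpoly) ^'n ^'n" where
  "const_mat X = (\<chi> i j. mconst (X $ i $ j))"

definition Zset :: "nat \<Rightarrow> (nat \<Rightarrow> ('n::finite, 'a::comm_ring_1) mpoly) \<Rightarrow> ('a ^'n ^'n) set" where
  "Zset m f = {X. \<forall>i<m. transpose (hessian (f i) ** const_mat X) = hessian (f i) ** const_mat X}"

definition jprod :: "'a::field ^'n::finite ^'n \<Rightarrow> 'a ^'n ^'n \<Rightarrow> 'a ^'n ^'n" where
  "jprod X Y = (\<chi> i j. (X ** Y + Y ** X) $ i $ j / 2)"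

definition smat :: "'a::times \<Rightarrow> 'a ^'n ^'n \<Rightarrow> 'a ^'n ^'n" where
  "smat c X = (\<chi> i j. c * X $ i $ j)"

definition jordan_subalgebra :: "('a::field ^'n::finite ^'n) set \<Rightarrow> bool" where
  "jordan_subalgebra S \<longleftrightarrow> 0 \<in> S \<and> (\<forall>X\<in>S. \<forall>Y\<in>S. X + Y \<in> S) \<and>
     (\<forall>c. \<forall>X\<in>S. smat c X \<in> S) \<and> (\<forall>X\<in>S. \<forall>Y\<in>S. jprod X Y \<in> S)"

definition jordan_algebra_on :: "('a::field ^'n::finite ^'n) set \<Rightarrow> bool" where
  "jordan_algebra_on S \<longleftrightarrow> (\<forall>X\<in>S. \<forall>Y\<in>S. jprod X Y = jprod Y X \<and>
     jprod (jprod (jprod X X) Y) X = jprod (jprod X X) (jprod Y X))"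

definition iso_to_field :: "('a::field ^'n::finite ^'n) set \<Rightarrow> bool" where
  "iso_to_field S \<longleftrightarrow> (\<exists>\<phi>. bij_betw \<phi> S (UNIV :: 'a set) \<and>
     (\<forall>X\<in>S. \<forall>Y\<in>S. \<phi> (X + Y) = \<phi> X + \<phi> Y) \<and>
     (\<forall>c. \<forall>X\<in>S. \<phi> (smat c X) = c * \<phi> X) \<and>
     (\<forall>X\<in>S. \<forall>Y\<in>S. \<phi> (jprod X Y) = \<phi> X * \<phi> Y))"

definition mdeg :: "('n::finite \<Rightarrow>\<^sub>0 nat) \<Rightarrow> nat" where
  "mdeg \<alpha> = (\<Sum>v\<in>UNIV. Poly_Mapping.lookup \<alpha> v)"

definition meval :: "('v, 'a::comm_ring_1) mpoly \<Rightarrow> ('v \<Rightarrow> 'a) \<Rightarrow> 'a" where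
  "meval P c = (\<Sum>\<mu>\<in>Poly_Mapping.keys P. Poly_Mapping.lookup P \<mu> * (\<Prod>v\<in>Poly_Mapping.keys \<mu>. c v ^ Poly_Mapping.lookup \<mu> v))"

text \<open>Coefficient variables for m polynomials of degrees d 0, ..., d (m-1): pairs (i, alpha)
  with i < m and alpha a monomial of total degree at most d i.\<close>
definition coeff_vars :: "nat \<Rightarrow> (nat \<Rightarrow> nat) \<Rightarrow> (nat \<times> ('n::finite \<Rightarrow>\<^sub>0 nat)) set" where
  "coeff_vars m d = {(i, \<alpha>). i < m \<and> mdeg \<alpha> \<le> d i}"

definition polys_of_coeffs :: "(nat \<Rightarrow> nat) \<Rightarrow> (nat \<times> ('n::finite \<Rightarrow>\<^sub>0 nat) \<Rightarrow> 'a::zero)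
    \<Rightarrow> nat \<Rightarrow> ('n, 'a) mpoly" where
  "polys_of_coeffs d c i = Abs_poly_mapping (\<lambda>\<alpha>. if mdeg \<alpha> \<le> d i then c (i, \<alpha>) else 0)"

end

theory Submission
  imports Defs
begin


lemma finite_shift_keys:
  fixes s :: "'n \<Rightarrow>\<^sub>0 nat"
  assumes that: "finite K"
  shows "finite {\<alpha>. \<alpha> + s \<in> K}"
proof -
  have "{\<alpha>. \<alpha> + s \<in> K} = (\<lambda>\<alpha>. \<alpha> + s) -` K" by auto
  moreover have "inj (\<lambda>\<alpha>::'n \<Rightarrow>\<^sub>0 nat. \<alpha> + s)" by (simp add: inj_on_def)
  ultimately show ?thesis using finite_vimageI[OF that] by metis
qed

lemma lookup_pdiff:
  "Poly_Mapping.lookup (pdiff i p) \<alpha> = of_nat (Poly_Mapping.lookup \<alpha> i + 1) * Poly_Mapping.lookup p (\<alpha> + Poly_Mapping.single i 1)"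
proof -
  have "finite {\<alpha>. of_nat (Poly_Mapping.lookup \<alpha> i + 1) * Poly_Mapping.lookup p (\<alpha> + Poly_Mapping.single i 1) \<noteq> 0}"
    by (rule finite_subset[OF _ finite_shift_keys[OF finite_keys[of p], of "Poly_Mapping.single i 1"]])
       (auto simp: in_keys_iff)
  then show ?thesis unfolding pdiff_def by simp
qed

lemma pdiff_commute:
  fixes a b :: 'n and f :: "('n, 'a::comm_ring_1) mpoly"
  shows "pdiff a (pdiff b f) = pdiff b (pdiff a f)"
proof (cases "a = b")
  case False
  show ?thesis
  proof (rule poly_mapping_eqI)
    fix \<beta> :: "'n \<Rightarrow>\<^sub>0 nat"
    have 1: "Poly_Mapping.lookup (\<beta> + Poly_Mapping.single a 1) b = Poly_Mapping.lookup \<beta> b"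
      and 2: "Poly_Mapping.lookup (\<beta> + Poly_Mapping.single b 1) a = Poly_Mapping.lookup \<beta> a"
      using False by (simp_all add: lookup_add lookup_single)
    have 3: "\<beta> + Poly_Mapping.single a 1 + Poly_Mapping.single b 1 = \<beta> + Poly_Mapping.single b 1 + Poly_Mapping.single a 1"
      by (simp add: add_ac)
    show "Poly_Mapping.lookup (pdiff a (pdiff b f)) \<beta> = Poly_Mapping.lookup (pdiff b (pdiff a f)) \<beta>"
      unfolding lookup_pdiff 1 2 3 by (simp add: mult.left_commute)
  qed
qed simp

lemma hessian_sym: "transpose (hessian f) = hessian f"
  by (simp add: transpose_def hessian_def vec_eq_iff pdiff_commute)

definition ZH :: "'b::comm_ring_1^'n^'n \<Rightarrow> ('b^'n^'n) set" where
  "ZH H = {A. transpose (H ** A) = H ** A}"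

lemma ZH_jmul:
  assumes H: "transpose H = H" and A: "A \<in> ZH H" and B: "B \<in> ZH H"
  shows "A ** B + B ** A \<in> ZH H"
proof -
  have 1: "transpose (H ** (A ** B)) = H ** (B ** A)"
    if A: "transpose (H ** A) = H ** A" and B: "transpose (H ** B) = H ** B" for A B
  proof -
    have "transpose (H ** (A ** B)) = transpose (A ** B) ** transpose H" by (rule matrix_transpose_mul)
    also have "\<dots> = (transpose B ** transpose A) ** transpose H" by (simp only: matrix_transpose_mul)
    also have "\<dots> = transpose B ** (transpose A ** transpose H)" by (simp only: matrix_mul_assoc)
    also have "transpose A ** transpose H = H ** A" using A by (simp only: matrix_transpose_mul[symmetric])
    also have "transpose B ** (H ** A) = (transpose B ** transpose H) ** A" by (simp only: H matrix_mul_assoc)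
    also have "transpose B ** transpose H = H ** B" using B by (simp only: matrix_transpose_mul[symmetric])
    finally show ?thesis by (simp only: matrix_mul_assoc)
  qed
  have A': "transpose (H ** A) = H ** A" and B': "transpose (H ** B) = H ** B"
    using A B by (simp_all add: ZH_def)
  have t: "transpose (X + Y) = transpose X + transpose Y" for X Y :: "'a^'b^'b"
    by (simp add: transpose_def vec_eq_iff)
  have "transpose (H ** (A ** B + B ** A)) = transpose (H ** (A ** B)) + transpose (H ** (B ** A))"
    by (simp only: matrix_add_ldistrib t)
  also have "\<dots> = H ** (B ** A) + H ** (A ** B)" by (simp only: 1[OF A' B'] 1[OF B' A'])
  also have "\<dots> = H ** (A ** B + B ** A)" by (simp only: matrix_add_ldistrib add.commute)
  finally show ?thesis by (simp add: ZH_def)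
qed

lemma ZH_add: "A \<in> ZH H \<Longrightarrow> B \<in> ZH H \<Longrightarrow> A + B \<in> ZH H"
  unfolding ZH_def by (simp add: matrix_add_ldistrib transpose_def vec_eq_iff)

lemma mat_scal:
  fixes H A :: "'a::comm_ring_1^'n^'n"
  shows "H ** (\<chi> i j. k * A$i$j) = (\<chi> i j. k * (H ** A)$i$j)"
proof -
  have c: "x * (k * y) = k * (x * y)" for x y by (simp add: mult.left_commute)
  show ?thesis by (simp add: matrix_matrix_mult_def vec_eq_iff sum_distrib_left c)
qed

lemma ZH_scal: "A \<in> ZH H \<Longrightarrow> (\<chi> i j. k * A$i$j) \<in> ZH H"
proof -
  assume "A \<in> ZH H"
  then have e: "transpose (H ** A) = H ** A" by (simp add: ZH_def)
  have "(H ** A)$j$i = (H ** A)$i$j" for i j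
    using arg_cong[OF e, of "\<lambda>M. M$i$j"] by (simp add: transpose_def)
  then show ?thesis unfolding ZH_def by (simp add: mat_scal transpose_def vec_eq_iff)
qed

lemma ZH_zero: "0 \<in> ZH H"
  unfolding ZH_def by (simp add: transpose_def vec_eq_iff)

lemma Zset_ZH: "Zset m f = {X. \<forall>i<m. const_mat X \<in> ZH (hessian (f i))}"
  by (simp add: Zset_def ZH_def)

lemma mconst_add: "mconst (a + b) = mconst a + mconst b"
  by (simp add: mconst_def single_add)
lemma mconst_mult: "mconst (a * b) = mconst a * mconst b"
  by (simp add: mconst_def mult_single)
lemma mconst_0: "mconst 0 = 0" by (simp add: mconst_def)
lemma mconst_sum: "mconst (sum g S) = (\<Sum>x\<in>S. mconst (g x))"
  by (rule sym, rule sum_comp_morphism[of mconst g S, unfolded o_def]) (simp_all add: mconst_add mconst_0)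

lemma const_mat_add: "const_mat (X + Y) = const_mat X + const_mat Y"
  by (simp add: const_mat_def vec_eq_iff mconst_add)
lemma const_mat_0: "const_mat 0 = 0"
  by (simp add: const_mat_def vec_eq_iff mconst_0)
lemma const_mat_mult: "const_mat (X ** Y) = const_mat X ** const_mat Y"
  by (simp add: const_mat_def vec_eq_iff matrix_matrix_mult_def mconst_sum mconst_mult)
lemma const_mat_smat: "const_mat (smat c X) = (\<chi> i j. mconst c * const_mat X $ i $ j)"
  by (simp add: const_mat_def smat_def vec_eq_iff mconst_mult)

lemma jprod_alt: "jprod X Y = smat (inverse 2) (X ** Y + Y ** X)"
  by (simp add: jprod_def smat_def vec_eq_iff field_simps)

lemma smat_add: "smat (c::'a::comm_ring_1) (A + B) = smat c A + smat c B"
  by (simp add: smat_def vec_eq_iff distrib_left)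
lemma smat_mul_l: "smat (c::'a::comm_ring_1) A ** B = smat c (A ** B)"
  by (simp add: smat_def vec_eq_iff matrix_matrix_mult_def sum_distrib_left mult_ac)
lemma smat_mul_r: "A ** smat (c::'a::comm_ring_1) B = smat c (A ** B)"
  by (simp add: smat_def vec_eq_iff matrix_matrix_mult_def sum_distrib_left mult_ac)
lemma smat_smat: "smat (c::'a::comm_ring_1) (smat d A) = smat (c * d) A"
  by (simp add: smat_def vec_eq_iff mult_ac)
lemma matrix_add_rdistrib': "(B + C) ** A = B ** A + C ** A"
  by (simp add: matrix_matrix_mult_def vec_eq_iff distrib_right sum.distrib)

lemma part1:
  assumes two: "(2::'a::field) \<noteq> 0"
  shows "jordan_subalgebra (Zset m (f :: nat \<Rightarrow> ('n::finite, 'a) mpoly)) \<and> jordan_algebra_on (Zset m f)"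
proof
  have sm: "smat c X \<in> Zset m f" if "X \<in> Zset m f" for c X
    using that ZH_scal by (auto simp: Zset_ZH const_mat_smat)
  show "jordan_subalgebra (Zset m f)"
    unfolding jordan_subalgebra_def
  proof (intro conjI ballI allI)
    show "0 \<in> Zset m f" by (simp add: Zset_ZH const_mat_0 ZH_zero)
    show "X + Y \<in> Zset m f" if "X \<in> Zset m f" "Y \<in> Zset m f" for X Y
      using that by (auto simp: Zset_ZH const_mat_add intro: ZH_add)
    show "smat c X \<in> Zset m f" if "X \<in> Zset m f" for c X using sm that .
    show "jprod X Y \<in> Zset m f" if "X \<in> Zset m f" "Y \<in> Zset m f" for X Y
    proof -
      have "X ** Y + Y ** X \<in> Zset m f"
      proof -
        { fix i assume i: "i < m"
          have a: "const_mat X \<in> ZH (hessian (f i))" using that(1) i by (simp add: Zset_ZH)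
          have b: "const_mat Y \<in> ZH (hessian (f i))" using that(2) i by (simp add: Zset_ZH)
          have "const_mat (X ** Y + Y ** X) \<in> ZH (hessian (f i))"
            unfolding const_mat_add const_mat_mult by (rule ZH_jmul[OF hessian_sym a b]) }
        then show ?thesis by (simp add: Zset_ZH)
      qed
      then show ?thesis unfolding jprod_alt by (rule sm)
    qed
  qed
  have sq: "jprod X X = X ** X" for X :: "'a^'n^'n"
    using two by (simp add: jprod_def vec_eq_iff)
  show "jordan_algebra_on (Zset m f)"
    unfolding jordan_algebra_on_def
  proof (intro ballI conjI)
    fix X Y :: "'a^'n^'n"
    show "jprod X Y = jprod Y X" by (simp add: jprod_def add.commute)
    show "jprod (jprod (jprod X X) Y) X = jprod (jprod X X) (jprod Y X)"
    proof -
      define P where "P = X ** X"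
      have e: "(P ** Y + Y ** P) ** X + X ** (P ** Y + Y ** P) = P ** (Y ** X + X ** Y) + (Y ** X + X ** Y) ** P"
        unfolding P_def by (simp add: matrix_add_ldistrib matrix_add_rdistrib' matrix_mul_assoc add_ac)
      show ?thesis unfolding sq P_def[symmetric] jprod_alt
        by (simp only: smat_mul_l smat_mul_r smat_add[symmetric] e)
    qed
  qed
qed



definition mon :: "('v \<Rightarrow>\<^sub>0 nat) \<Rightarrow> ('v \<Rightarrow> 'a::comm_ring_1) \<Rightarrow> 'a" where
  "mon \<mu> c = (\<Prod>v\<in>Poly_Mapping.keys \<mu>. c v ^ Poly_Mapping.lookup \<mu> v)"

lemma meval_mon: "meval P c = (\<Sum>\<mu>\<in>Poly_Mapping.keys P. Poly_Mapping.lookup P \<mu> * mon \<mu> c)"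
  by (simp add: meval_def mon_def)

lemma mon_superset:
  assumes "finite S" "Poly_Mapping.keys \<mu> \<subseteq> S"
  shows "mon \<mu> c = (\<Prod>v\<in>S. c v ^ Poly_Mapping.lookup \<mu> v)"
  unfolding mon_def
  by (rule prod.mono_neutral_left[OF assms(1) assms(2)]) (auto simp: in_keys_iff)

lemma mon_add: "mon (\<mu> + \<nu>) c = mon \<mu> c * mon \<nu> c"
proof -
  let ?S = "Poly_Mapping.keys \<mu> \<union> Poly_Mapping.keys \<nu>"
  have "mon (\<mu> + \<nu>) c = (\<Prod>v\<in>?S. c v ^ Poly_Mapping.lookup (\<mu> + \<nu>) v)"
    by (rule mon_superset) (auto dest: subsetD[OF keys_add])
  also have "\<dots> = (\<Prod>v\<in>?S. c v ^ Poly_Mapping.lookup \<mu> v) * (\<Prod>v\<in>?S. c v ^ Poly_Mapping.lookup \<nu> v)"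
    by (simp add: lookup_add power_add prod.distrib)
  also have "\<dots> = mon \<mu> c * mon \<nu> c"
  proof -
    have "mon \<mu> c = (\<Prod>v\<in>?S. c v ^ Poly_Mapping.lookup \<mu> v)" by (rule mon_superset) auto
    moreover have "mon \<nu> c = (\<Prod>v\<in>?S. c v ^ Poly_Mapping.lookup \<nu> v)" by (rule mon_superset) auto
    ultimately show ?thesis by simp
  qed
  finally show ?thesis .
qed

lemma mon_zero: "mon 0 c = 1" by (simp add: mon_def)

lemma mon_single1: "mon (Poly_Mapping.single v (1::nat)) c = c v"
  by (simp add: mon_def)

lemma meval_superset:
  assumes "finite S" "Poly_Mapping.keys P \<subseteq> S"
  shows "meval P c = (\<Sum>\<mu>\<in>S. Poly_Mapping.lookup P \<mu> * mon \<mu> c)"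
  unfolding meval_mon
  by (rule sum.mono_neutral_left[OF assms(1) assms(2)]) (auto simp: in_keys_iff)

lemma meval_0: "meval 0 c = 0" by (simp add: meval_def)

lemma meval_add: "meval (P + Q) c = meval P c + meval Q c"
proof -
  let ?S = "Poly_Mapping.keys P \<union> Poly_Mapping.keys Q"
  have "meval (P + Q) c = (\<Sum>\<mu>\<in>?S. Poly_Mapping.lookup (P + Q) \<mu> * mon \<mu> c)"
    by (rule meval_superset) (auto dest: subsetD[OF keys_add])
  also have "\<dots> = (\<Sum>\<mu>\<in>?S. Poly_Mapping.lookup P \<mu> * mon \<mu> c) + (\<Sum>\<mu>\<in>?S. Poly_Mapping.lookup Q \<mu> * mon \<mu> c)"
    by (simp add: lookup_add distrib_right sum.distrib)
  also have "\<dots> = meval P c + meval Q c"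
  proof -
    have "meval P c = (\<Sum>\<mu>\<in>?S. Poly_Mapping.lookup P \<mu> * mon \<mu> c)" by (rule meval_superset) auto
    moreover have "meval Q c = (\<Sum>\<mu>\<in>?S. Poly_Mapping.lookup Q \<mu> * mon \<mu> c)" by (rule meval_superset) auto
    ultimately show ?thesis by simp
  qed
  finally show ?thesis .
qed

lemma meval_single: "meval (Poly_Mapping.single \<mu> a) c = a * mon \<mu> c"
  by (subst meval_superset[of "{\<mu>}"]) auto

lemma meval_sum: "meval (sum g S) c = (\<Sum>x\<in>S. meval (g x) c)"
  by (induction S rule: infinite_finite_induct) (auto simp: meval_0 meval_add)

lemma poly_decomp: "P = (\<Sum>\<mu>\<in>Poly_Mapping.keys P. Poly_Mapping.single \<mu> (Poly_Mapping.lookup P \<mu>))"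
proof (rule poly_mapping_eqI)
  fix k
  show "Poly_Mapping.lookup P k = Poly_Mapping.lookup (\<Sum>\<mu>\<in>Poly_Mapping.keys P. Poly_Mapping.single \<mu> (Poly_Mapping.lookup P \<mu>)) k"
    by (cases "k \<in> Poly_Mapping.keys P") (auto simp: lookup_sum lookup_single when_def in_keys_iff)
qed

lemma meval_mult: "meval (P * Q) c = meval P c * meval Q c"
proof -
  let ?K = "Poly_Mapping.keys" and ?l = "Poly_Mapping.lookup"
  have "P * Q = (\<Sum>\<mu>\<in>?K P. Poly_Mapping.single \<mu> (?l P \<mu>)) * (\<Sum>\<nu>\<in>?K Q. Poly_Mapping.single \<nu> (?l Q \<nu>))"
    by (simp flip: poly_decomp)
  also have "\<dots> = (\<Sum>\<mu>\<in>?K P. \<Sum>\<nu>\<in>?K Q. Poly_Mapping.single (\<mu> + \<nu>) (?l P \<mu> * ?l Q \<nu>))"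
    by (simp add: sum_distrib_left sum_distrib_right mult_single) (rule sum.swap)
  finally have "meval (P * Q) c = (\<Sum>\<mu>\<in>?K P. \<Sum>\<nu>\<in>?K Q. ?l P \<mu> * ?l Q \<nu> * (mon \<mu> c * mon \<nu> c))"
    by (simp add: meval_sum meval_single mon_add)
  also have "\<dots> = meval P c * meval Q c"
    by (simp add: meval_mon sum_product mult_ac)
  finally show ?thesis .
qed

lemma meval_1: "meval 1 c = 1"
  using meval_single[of 0 1 c] by (simp add: mon_zero)

lemma meval_uminus: "meval (- P) c = - meval P c"
  using meval_add[of P "-P" c] by (simp add: meval_0 eq_neg_iff_add_eq_0 add.commute)

lemma meval_diff: "meval (P - Q) c = meval P c - meval Q c"
  using meval_add[of P "-Q" c] by (simp add: meval_uminus)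

lemma meval_prod: "meval (prod g S) c = (\<Prod>x\<in>S. meval (g x) c)"
  by (induction S rule: infinite_finite_induct) (auto simp: meval_1 meval_mult)

lemma meval_of_int: "meval (of_int k) c = of_int k"
  using meval_single[of 0 "of_int k" c] by (simp add: mon_zero)

lemma meval_det: "meval (det A) c = det (\<chi> i j. meval (A$i$j) c)"
  unfolding det_def by (simp add: meval_sum meval_mult meval_prod meval_of_int)



definition good :: "'v set \<Rightarrow> ('v, 'a::comm_ring_1) mpoly \<Rightarrow> bool" where
  "good V p \<longleftrightarrow> (\<forall>\<mu>\<in>Poly_Mapping.keys p. Poly_Mapping.keys \<mu> \<subseteq> V)"

lemma good_0: "good V 0" by (simp add: good_def)
lemma good_single: "Poly_Mapping.keys \<mu> \<subseteq> V \<Longrightarrow> good V (Poly_Mapping.single \<mu> a)"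
  by (simp add: good_def)
lemma good_add: "good V p \<Longrightarrow> good V q \<Longrightarrow> good V (p + q)"
  unfolding good_def
proof (intro ballI)
  fix \<mu> assume "\<forall>\<mu>\<in>Poly_Mapping.keys p. Poly_Mapping.keys \<mu> \<subseteq> V" "\<forall>\<mu>\<in>Poly_Mapping.keys q. Poly_Mapping.keys \<mu> \<subseteq> V"
    "\<mu> \<in> Poly_Mapping.keys (p + q)"
  moreover have "\<mu> \<in> Poly_Mapping.keys p \<union> Poly_Mapping.keys q"
    using keys_add \<open>\<mu> \<in> Poly_Mapping.keys (p + q)\<close> by (rule subsetD)
  ultimately show "Poly_Mapping.keys \<mu> \<subseteq> V" by blast
qed
lemma keys_uminus': "Poly_Mapping.keys (- p) = Poly_Mapping.keys p"
  by (auto simp: in_keys_iff)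
lemma good_uminus: "good V p \<Longrightarrow> good V (- p)"
  by (simp add: good_def keys_uminus')
lemma good_diff: "good V p \<Longrightarrow> good V q \<Longrightarrow> good V (p - q)"
  using good_add[of V p "- q"] good_uminus[of V q] by simp
lemma good_mult: "good V p \<Longrightarrow> good V q \<Longrightarrow> good V (p * q)"
  unfolding good_def
proof
  fix \<mu> assume p: "\<forall>\<mu>\<in>Poly_Mapping.keys p. Poly_Mapping.keys \<mu> \<subseteq> V"
    and q: "\<forall>\<mu>\<in>Poly_Mapping.keys q. Poly_Mapping.keys \<mu> \<subseteq> V"
    and m: "\<mu> \<in> Poly_Mapping.keys (p * q)"
  then obtain a b where "\<mu> = a + b" "a \<in> Poly_Mapping.keys p" "b \<in> Poly_Mapping.keys q"
    using keys_mult by blast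
  then show "Poly_Mapping.keys \<mu> \<subseteq> V" using p q keys_add[of a b] by blast
qed
lemma good_1: "good V 1"
  using good_single[of 0 V 1] by simp
lemma good_of_int: "good V (of_int k)"
  using good_single[of 0 V "of_int k"] by simp
lemma good_sum: "(\<And>x. x \<in> S \<Longrightarrow> good V (g x)) \<Longrightarrow> good V (sum g S)"
  by (induction S rule: infinite_finite_induct) (auto simp: good_0 good_add)
lemma good_prod: "(\<And>x. x \<in> S \<Longrightarrow> good V (g x)) \<Longrightarrow> good V (prod g S)"
  by (induction S rule: infinite_finite_induct) (auto simp: good_1 good_mult)
lemma good_det: "(\<And>i j. good V (A$i$j)) \<Longrightarrow> good V (det A)"
  unfolding det_def by (intro good_sum good_mult good_of_int good_prod) auto

lemma mdeg_add: "mdeg (\<alpha> + \<beta>) = mdeg \<alpha> + mdeg \<beta>"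
  by (simp add: mdeg_def lookup_add sum.distrib)
lemma mdeg_single: "mdeg (Poly_Mapping.single (v::'n::finite) k) = k"
  by (simp add: mdeg_def lookup_single when_def)
lemma mdeg_0: "mdeg (0::'n::finite \<Rightarrow>\<^sub>0 nat) = 0"
  by (simp add: mdeg_def)

lemma finite_mdeg_le: "finite {\<alpha>::'n::finite \<Rightarrow>\<^sub>0 nat. mdeg \<alpha> \<le> D}"
proof -
  have inj: "inj (Poly_Mapping.lookup :: ('n \<Rightarrow>\<^sub>0 nat) \<Rightarrow> _)"
    by (simp add: inj_on_def)
  have fin: "finite (PiE (UNIV::'n set) (\<lambda>_. {..D}))" by (rule finite_PiE) auto
  have "{\<alpha>::'n \<Rightarrow>\<^sub>0 nat. mdeg \<alpha> \<le> D} \<subseteq> Poly_Mapping.lookup -` PiE UNIV (\<lambda>_. {..D})"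
  proof
    fix \<alpha> :: "'n \<Rightarrow>\<^sub>0 nat" assume "\<alpha> \<in> {\<alpha>. mdeg \<alpha> \<le> D}"
    then have "Poly_Mapping.lookup \<alpha> v \<le> D" for v
      using member_le_sum[of v UNIV "Poly_Mapping.lookup \<alpha>"] by (auto simp: mdeg_def)
    then show "\<alpha> \<in> Poly_Mapping.lookup -` PiE UNIV (\<lambda>_. {..D})" by (auto simp: PiE_def)
  qed
  then show ?thesis using finite_vimageI[OF fin inj] finite_subset by blast
qed

lemma lookup_polys_of_coeffs:
  fixes c :: "nat \<times> ('n::finite \<Rightarrow>\<^sub>0 nat) \<Rightarrow> 'a::zero"
  shows "Poly_Mapping.lookup (polys_of_coeffs d c i) \<alpha> = (if mdeg \<alpha> \<le> d i then c (i, \<alpha>) else 0)"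
proof -
  have "finite {\<alpha>. (if mdeg \<alpha> \<le> d i then c (i, \<alpha>) else 0) \<noteq> 0}"
    by (rule finite_subset[OF _ finite_mdeg_le[of "d i"]]) auto
  then show ?thesis unfolding polys_of_coeffs_def by simp
qed

lemma lookup_mult_mconst:
  fixes p :: "('n, 'a::comm_ring_1) mpoly"
  shows "Poly_Mapping.lookup (p * mconst x) \<beta> = Poly_Mapping.lookup p \<beta> * x"
proof -
  have "p * mconst x = Poly_Mapping.map ((*) x) p"
    by (simp add: mconst_def mult_map_scale_conv_mult mult.commute)
  then show ?thesis by (simp add: map.rep_eq when_def mult.commute)
qed

lemma Z_lookup_eq:
  fixes H :: "(('n, 'a::comm_ring_1) mpoly)^'n^'n" and Y :: "'a^'n^'n"
  assumes "transpose (H ** const_mat Y) = H ** const_mat Y"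
  shows "(\<Sum>k\<in>UNIV. Poly_Mapping.lookup (H$a$k) \<beta> * Y$k$b) = (\<Sum>k\<in>UNIV. Poly_Mapping.lookup (H$b$k) \<beta> * Y$k$a)"
proof -
  have "(H ** const_mat Y)$a$b = (H ** const_mat Y)$b$a"
    using arg_cong[OF assms, of "\<lambda>M. M$a$b"] by (simp add: transpose_def)
  then have "Poly_Mapping.lookup ((H ** const_mat Y)$a$b) \<beta> = Poly_Mapping.lookup ((H ** const_mat Y)$b$a) \<beta>"
    by simp
  then show ?thesis
    by (simp add: matrix_matrix_mult_def const_mat_def lookup_sum lookup_mult_mconst)
qed



abbreviation ev :: "'n \<Rightarrow> 'n \<Rightarrow>\<^sub>0 nat" where "ev v \<equiv> Poly_Mapping.single v (1::nat)"

definition hc :: "nat \<Rightarrow> (nat \<times> ('n \<Rightarrow>\<^sub>0 nat) \<Rightarrow> 'a::comm_ring_1) \<Rightarrow> 'n \<Rightarrow> 'n \<Rightarrow> ('n \<Rightarrow>\<^sub>0 nat) \<Rightarrow> 'a" where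
  "hc i0 c a k \<beta> = of_nat (Poly_Mapping.lookup \<beta> a + 1) * of_nat (Poly_Mapping.lookup (\<beta> + ev a) k + 1) * c (i0, \<beta> + ev a + ev k)"

definition hp :: "nat \<Rightarrow> 'n \<Rightarrow> 'n \<Rightarrow> ('n \<Rightarrow>\<^sub>0 nat) \<Rightarrow> (nat \<times> ('n \<Rightarrow>\<^sub>0 nat), 'a::comm_ring_1) mpoly" where
  "hp i0 a k \<beta> = Poly_Mapping.single (Poly_Mapping.single (i0, \<beta> + ev a + ev k) 1)
      (of_nat (Poly_Mapping.lookup \<beta> a + 1) * of_nat (Poly_Mapping.lookup (\<beta> + ev a) k + 1))"

lemma meval_hp: "meval (hp i0 a k \<beta>) c = hc i0 c a k \<beta>"
  using mon_single1[of "(i0, \<beta> + ev a + ev k)" c] by (simp add: hp_def hc_def meval_single)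

definition trip :: "'n \<Rightarrow> 'n \<times> 'n \<Rightarrow> 'n \<times> 'n \<times> ('n \<Rightarrow>\<^sub>0 nat)" where
  "trip z r = (if fst r = z then (z, snd r, 0) else if snd r = z then (fst r, z, ev z) else (z, snd r, ev (fst r)))"

definition Mgen :: "('n::finite \<Rightarrow> 'n \<Rightarrow> ('n \<Rightarrow>\<^sub>0 nat) \<Rightarrow> 'b::comm_ring_1) \<Rightarrow> 'n \<Rightarrow> 'b^('n \<times> 'n)^('n \<times> 'n)" where
  "Mgen g z = (\<chi> r s. if r = (z, z) then (if s = (z, z) then 1 else 0) else
      (case trip z r of (a, b, \<beta>) \<Rightarrow> (if snd s = b then g a (fst s) \<beta> else 0) - (if snd s = a then g b (fst s) \<beta> else 0)))"

lemma meval_Mgen: "(\<chi> i j. meval (Mgen (hp i0) z $ i $ j) c) = Mgen (hc i0 c) z"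
  by (simp add: Mgen_def vec_eq_iff meval_1 meval_0 meval_diff meval_hp split: prod.split)

lemma ifmult: "(if P then 1 else 0) * (y::'b::comm_ring_1) = (if P then y else 0)"
  by simp

lemma Mgen_row_zz: "(Mgen g z *v x) $ (z, z) = x $ (z, z)"
proof -
  have "(Mgen g z *v x) $ (z,z) = (\<Sum>s\<in>UNIV. (if s = (z,z) then 1 else 0) * x $ s)"
    by (simp add: Mgen_def matrix_vector_mult_def)
  also have "\<dots> = (\<Sum>s\<in>UNIV. (if s = (z,z) then x $ s else 0))"
    by (simp only: ifmult)
  also have "\<dots> = x $ (z, z)" by simp
  finally show ?thesis .
qed

lemma sum_pairs: "(\<Sum>s\<in>(UNIV::('n::finite \<times> 'n) set). f s) = (\<Sum>k\<in>UNIV. \<Sum>l\<in>UNIV. f (k, l))"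
proof -
  have "(\<Sum>s\<in>(UNIV::('n \<times> 'n) set). f s) = (\<Sum>s\<in>UNIV \<times> UNIV. f s)" by simp
  also have "\<dots> = (\<Sum>k\<in>UNIV. \<Sum>l\<in>UNIV. f (k, l))" unfolding sum.cartesian_product by simp
  finally show ?thesis .
qed

lemma ifmult2: "(if P then (a::'b::comm_ring_1) else 0) * y = (if P then a * y else 0)"
  by simp

lemma sum_delta2:
  fixes X :: "'n::finite \<Rightarrow> 'b::comm_ring_1"
  shows "(\<Sum>l\<in>UNIV. ((if l = b then A else 0) - (if l = a then B else 0)) * X l) = A * X b - B * X a"
proof -
  have "(\<Sum>l\<in>UNIV. ((if l = b then A else 0) - (if l = a then B else 0)) * X l)
      = (\<Sum>l\<in>UNIV. (if l = b then A * X l else 0)) - (\<Sum>l\<in>UNIV. (if l = a then B * X l else 0))"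
    by (simp only: left_diff_distrib sum_subtractf ifmult2)
  also have "\<dots> = A * X b - B * X a" by simp
  finally show ?thesis .
qed

lemma Mgen_row:
  fixes g :: "'n::finite \<Rightarrow> 'n \<Rightarrow> ('n \<Rightarrow>\<^sub>0 nat) \<Rightarrow> 'b::comm_ring_1"
  assumes "r \<noteq> (z, z)" "trip z r = (a, b, \<beta>)"
  shows "(Mgen g z *v x) $ r = (\<Sum>k\<in>UNIV. g a k \<beta> * x $ (k, b)) - (\<Sum>k\<in>UNIV. g b k \<beta> * x $ (k, a))"
proof -
  have "(Mgen g z *v x) $ r = (\<Sum>k\<in>UNIV. \<Sum>l\<in>UNIV. ((if l = b then g a k \<beta> else 0) - (if l = a then g b k \<beta> else 0)) * x $ (k, l))"
    using assms by (simp add: Mgen_def matrix_vector_mult_def sum_pairs cong: if_cong)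
  also have "\<dots> = (\<Sum>k\<in>UNIV. g a k \<beta> * x $ (k, b) - g b k \<beta> * x $ (k, a))"
    by (simp only: sum_delta2)
  also have "\<dots> = (\<Sum>k\<in>UNIV. g a k \<beta> * x $ (k, b)) - (\<Sum>k\<in>UNIV. g b k \<beta> * x $ (k, a))"
    by (simp add: sum_subtractf)
  finally show ?thesis .
qed

definition c0 :: "'n::finite \<Rightarrow> nat \<times> ('n \<Rightarrow>\<^sub>0 nat) \<Rightarrow> 'a::comm_ring_1" where
  "c0 z ia = (let \<alpha> = snd ia in
     if (mdeg \<alpha> = 2 \<and> (\<forall>v. Poly_Mapping.lookup \<alpha> v \<noteq> 1)) \<or>
        (mdeg \<alpha> = 3 \<and> Poly_Mapping.lookup \<alpha> z = 1 \<and> (\<forall>v. v \<noteq> z \<longrightarrow> Poly_Mapping.lookup \<alpha> v \<noteq> 1))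
     then 1 else 0)"

lemma lk: "Poly_Mapping.lookup (ev a) v = (if a = v then 1 else 0)"
  by (simp add: lookup_single when_def)

lemma L0:
  fixes z a k :: "'n::finite"
  shows "hc i0 (c0 z) a k 0 = (if k = a then 2 else (0::'a::comm_ring_1))"
proof (cases "k = a")
  case True
  have "c0 z (i0, ev a + ev a) = (1::'a)"
    by (simp add: c0_def Let_def mdeg_add mdeg_single lookup_add lk lookup_single when_def)
  then show ?thesis using True by (simp add: hc_def lk lookup_single when_def)
next
  case False
  have "Poly_Mapping.lookup (ev a + ev k) a = 1" using False by (simp add: lookup_add lk lookup_single when_def)
  then have "c0 z (i0, ev a + ev k) = (0::'a)"
    by (auto simp: c0_def Let_def mdeg_add mdeg_single)
  then show ?thesis using False by (simp add: hc_def)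
qed

lemma L1:
  fixes z p k :: "'n::finite"
  assumes "p \<noteq> z"
  shows "hc i0 (c0 z) p k (ev z) = (if k = p then 2 else (0::'a::comm_ring_1))"
proof (cases "k = p")
  case True
  have "c0 z (i0, ev z + ev p + ev p) = (1::'a)"
    using assms by (simp add: c0_def Let_def mdeg_add mdeg_single lookup_add lk lookup_single when_def)
  then show ?thesis using True assms by (simp add: hc_def lk lookup_add lookup_single when_def)
next
  case False
  have "c0 z (i0, ev z + ev p + ev k) = (0::'a)"
  proof (cases "k = z")
    case True
    then have "Poly_Mapping.lookup (ev z + ev p + ev k) z = 2" using assms by (simp add: lookup_add lk lookup_single when_def)
    then show ?thesis by (auto simp: c0_def Let_def mdeg_add mdeg_single)
  next
    case kz: False
    then have "Poly_Mapping.lookup (ev z + ev p + ev k) k = 1" using False by (simp add: lookup_add lk lookup_single when_def)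
    then show ?thesis using kz by (auto simp: c0_def Let_def mdeg_add mdeg_single)
  qed
  then show ?thesis using False by (simp add: hc_def)
qed

lemma L2:
  fixes z k :: "'n::finite"
  shows "hc i0 (c0 z) z k (ev z) = (0::'a::comm_ring_1)"
proof -
  have "Poly_Mapping.lookup (ev z + ev z + ev k) z \<ge> 2" by (simp add: lookup_add lk lookup_single when_def)
  then have "c0 z (i0, ev z + ev z + ev k) = (0::'a)"
    by (auto simp: c0_def Let_def mdeg_add mdeg_single)
  then show ?thesis by (simp add: hc_def)
qed

lemma L3:
  fixes z p k :: "'n::finite"
  assumes "p \<noteq> z"
  shows "hc i0 (c0 z) z k (ev p) = (if k = p then 2 else (0::'a::comm_ring_1))"
proof (cases "k = p")
  case True
  have "c0 z (i0, ev p + ev z + ev p) = (1::'a)"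
    using assms by (simp add: c0_def Let_def mdeg_add mdeg_single lookup_add lk lookup_single when_def)
  then show ?thesis using True assms by (simp add: hc_def lk lookup_add lookup_single when_def)
next
  case False
  have "c0 z (i0, ev p + ev z + ev k) = (0::'a)"
  proof (cases "k = z")
    case True
    then have "Poly_Mapping.lookup (ev p + ev z + ev k) z = 2" using assms by (simp add: lookup_add lk lookup_single when_def)
    then show ?thesis by (auto simp: c0_def Let_def mdeg_add mdeg_single)
  next
    case kz: False
    then have "Poly_Mapping.lookup (ev p + ev z + ev k) k = 1" using False by (simp add: lookup_add lk lookup_single when_def)
    then show ?thesis using kz by (auto simp: c0_def Let_def mdeg_add mdeg_single)
  qed
  then show ?thesis using False assms by (simp add: hc_def lk lookup_single when_def)
qed

lemma L4:
  fixes z p q k :: "'n::finite"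
  assumes "p \<noteq> z" "q \<noteq> z"
  shows "hc i0 (c0 z) q k (ev p) = (if k = z \<and> p = q then 2 else (0::'a::comm_ring_1))"
proof (cases "k = z \<and> p = q")
  case True
  have "c0 z (i0, ev p + ev p + ev z) = (1::'a)"
    using assms by (simp add: c0_def Let_def mdeg_add mdeg_single lookup_add lk lookup_single when_def)
  then show ?thesis using True assms by (simp add: hc_def lk lookup_add lookup_single when_def)
next
  case False
  have "c0 z (i0, ev p + ev q + ev k) = (0::'a)"
  proof (cases "k = z")
    case False
    then have "Poly_Mapping.lookup (ev p + ev q + ev k) z = 0" using assms by (simp add: lookup_add lk lookup_single when_def)
    then show ?thesis by (auto simp: c0_def Let_def mdeg_add mdeg_single)
  next
    case kz: True
    with False have "p \<noteq> q" by simp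
    then have "Poly_Mapping.lookup (ev p + ev q + ev k) p = 1" using assms kz by (simp add: lookup_add lk lookup_single when_def)
    then show ?thesis using assms by (auto simp: c0_def Let_def mdeg_add mdeg_single)
  qed
  then show ?thesis using False by (auto simp: hc_def)
qed



lemma det_nz_iff:
  fixes A :: "'a::field^'n^'n"
  shows "det A \<noteq> 0 \<longleftrightarrow> (\<forall>x. A *v x = 0 \<longrightarrow> x = 0)"
  by (simp add: invertible_det_nz[symmetric] invertible_left_inverse matrix_left_invertible_ker)

lemma sumd: "(\<Sum>k\<in>UNIV. (if k = p then c else 0) * f k) = c * f (p::'n::finite)"
  for c :: "'b::comm_ring_1"
  by (simp only: ifmult2) simp

lemma inj_c0:
  fixes z :: "'n::finite" and x :: "'a::field^('n \<times> 'n)"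
  assumes two: "(2::'a) \<noteq> 0" and Mx: "Mgen (hc i0 (c0 z)) z *v x = 0"
  shows "x = 0"
proof -
  let ?M = "Mgen (hc i0 (c0 z)) z :: 'a^('n \<times> 'n)^('n \<times> 'n)"
  have row: "(?M *v x) $ r = 0" for r using Mx by simp
  have zz: "x$(z,z) = 0" using row[of "(z,z)"] by (simp add: Mgen_row_zz)
  have pz: "x$(p,z) = 0" if p: "p \<noteq> z" for p
  proof -
    have t: "trip z (p,z) = (p, z, ev z)" using p by (simp add: trip_def)
    have "(?M *v x)$(p,z) = (\<Sum>k\<in>UNIV. hc i0 (c0 z) p k (ev z) * x$(k,z)) - (\<Sum>k\<in>UNIV. hc i0 (c0 z) z k (ev z) * x$(k,p))"
      using p by (intro Mgen_row t) auto
    also have "\<dots> = 2 * x$(p,z)" using p by (simp add: L1[simplified] L2[simplified] sumd)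
    finally show ?thesis using row[of "(p,z)"] two by simp
  qed
  have zq: "x$(z,q) = 0" if q: "q \<noteq> z" for q
  proof -
    have t: "trip z (z,q) = (z, q, 0)" by (simp add: trip_def)
    have "(?M *v x)$(z,q) = (\<Sum>k\<in>UNIV. hc i0 (c0 z) z k 0 * x$(k,q)) - (\<Sum>k\<in>UNIV. hc i0 (c0 z) q k 0 * x$(k,z))"
      using q by (intro Mgen_row t) auto
    also have "\<dots> = 2 * x$(z,q) - 2 * x$(q,z)" by (simp add: L0 sumd)
    finally show ?thesis using row[of "(z,q)"] two pz[OF q] by simp
  qed
  have pq: "x$(p,q) = 0" if p: "p \<noteq> z" and q: "q \<noteq> z" for p q
  proof -
    have t: "trip z (p,q) = (z, q, ev p)" using p q by (simp add: trip_def)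
    have "(\<Sum>k\<in>UNIV. hc i0 (c0 z) q k (ev p) * x$(k,z)) = (\<Sum>k\<in>UNIV. (if k = z \<and> p = q then 2 else 0) * x$(k,z))"
      by (simp only: L4[OF p q])
    also have "\<dots> = 0" by (cases "p = q") (simp_all add: sumd zz)
    finally have s2: "(\<Sum>k\<in>UNIV. hc i0 (c0 z) q k (ev p) * x$(k,z)) = 0" .
    have "(?M *v x)$(p,q) = (\<Sum>k\<in>UNIV. hc i0 (c0 z) z k (ev p) * x$(k,q)) - (\<Sum>k\<in>UNIV. hc i0 (c0 z) q k (ev p) * x$(k,z))"
      using p by (intro Mgen_row t) auto
    also have "\<dots> = 2 * x$(p,q)" using p by (simp add: L3[simplified] sumd s2[simplified])
    finally show ?thesis using row[of "(p,q)"] two by simp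
  qed
  show ?thesis
  proof (rule vec_eq_iff[THEN iffD2], rule allI)
    fix s :: "'n \<times> 'n"
    obtain p q where s: "s = (p,q)" by (cases s)
    show "x $ s = 0 $ s"
      using zz pz zq pq unfolding s by (cases "p = z"; cases "q = z") auto
  qed
qed

lemma hc_hess:
  fixes c :: "nat \<times> ('n::finite \<Rightarrow>\<^sub>0 nat) \<Rightarrow> 'a::comm_ring_1"
  assumes "mdeg \<beta> + 2 \<le> d i0"
  shows "hc i0 c a k \<beta> = Poly_Mapping.lookup (hessian (polys_of_coeffs d c i0) $ a $ k) \<beta>"
  using assms by (simp add: hessian_def lookup_pdiff lookup_polys_of_coeffs hc_def mdeg_add mdeg_single mult.assoc)

lemma trip_mdeg: "trip z r = (a, b, \<beta>) \<Longrightarrow> mdeg \<beta> \<le> 1"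
  by (auto simp: trip_def mdeg_single mdeg_0 split: if_splits)

lemma Z_rows:
  fixes c :: "nat \<times> ('n::finite \<Rightarrow>\<^sub>0 nat) \<Rightarrow> 'a::comm_ring_1" and Y :: "'a^'n^'n"
  assumes Y: "Y \<in> Zset m (polys_of_coeffs d c)" and i0: "i0 < m" "3 \<le> d i0"
    and r: "r \<noteq> (z, z)"
  shows "(Mgen (hc i0 c) z *v (\<chi> s. Y $ fst s $ snd s)) $ r = 0"
proof -
  obtain a b \<beta> where t: "trip z r = (a, b, \<beta>)" by (cases "trip z r") auto
  have deg: "mdeg \<beta> + 2 \<le> d i0" using trip_mdeg[OF t] i0 by simp
  have Z: "transpose (hessian (polys_of_coeffs d c i0) ** const_mat Y) = hessian (polys_of_coeffs d c i0) ** const_mat Y"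
    using Y i0 by (simp add: Zset_def)
  have "(Mgen (hc i0 c) z *v (\<chi> s. Y $ fst s $ snd s)) $ r
      = (\<Sum>k\<in>UNIV. hc i0 c a k \<beta> * Y $ k $ b) - (\<Sum>k\<in>UNIV. hc i0 c b k \<beta> * Y $ k $ a)"
    using Mgen_row[OF r t, where g = "hc i0 c" and x = "\<chi> s. Y $ fst s $ snd s"] by simp
  also have "\<dots> = 0"
    using Z_lookup_eq[OF Z, of a \<beta> b] by (simp add: hc_hess[of \<beta> d i0 c, OF deg])
  finally show ?thesis .
qed



lemma const_mat_1: "const_mat (mat 1) = mat 1"
  by (simp add: const_mat_def mat_def vec_eq_iff mconst_def)

lemma one_in_Z: "mat 1 \<in> Zset m (f :: nat \<Rightarrow> ('n::finite, 'a::field) mpoly)"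
  by (simp add: Zset_def const_mat_1 hessian_sym)

lemma smat_I_mult: "smat (s::'a::comm_ring_1) (mat 1) ** smat t (mat 1) = (smat (s * t) (mat 1) :: 'a^'n::finite^'n)"
  by (simp add: smat_mul_l smat_mul_r smat_smat mult.commute)

lemma part2_iso:
  fixes c :: "nat \<times> ('n::finite \<Rightarrow>\<^sub>0 nat) \<Rightarrow> 'a::field"
  assumes two: "(2::'a) \<noteq> 0" and i0: "i0 < m" "3 \<le> d i0"
    and inj: "\<forall>x. Mgen (hc i0 c) z *v x = 0 \<longrightarrow> x = 0"
  shows "iso_to_field (Zset m (polys_of_coeffs d c))"
proof -
  let ?S = "Zset m (polys_of_coeffs d c)"
  have sub: "jordan_subalgebra ?S" using part1[OF two] by blast
  have sm: "smat t X \<in> ?S" if "X \<in> ?S" for t X using sub that by (simp add: jordan_subalgebra_def)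
  have ad: "X + Y \<in> ?S" if "X \<in> ?S" "Y \<in> ?S" for X Y using sub that by (simp add: jordan_subalgebra_def)
  have I: "smat t (mat 1) \<in> ?S" for t using sm[OF one_in_Z] .
  have key: "X = smat (X$z$z) (mat 1)" if X: "X \<in> ?S" for X
  proof -
    define Y where "Y = X + smat (- (X$z$z)) (mat 1)"
    have Y: "Y \<in> ?S" unfolding Y_def by (rule ad[OF X I])
    have Yzz: "Y$z$z = 0" by (simp add: Y_def smat_def mat_def)
    have "Mgen (hc i0 c) z *v (\<chi> s. Y $ fst s $ snd s) = 0"
    proof (rule vec_eq_iff[THEN iffD2], rule allI)
      fix r :: "'n \<times> 'n"
      show "(Mgen (hc i0 c) z *v (\<chi> s. Y $ fst s $ snd s)) $ r = 0 $ r"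
      proof (cases "r = (z, z)")
        case True then show ?thesis by (simp add: Mgen_row_zz Yzz)
      next
        case False then show ?thesis using Z_rows[OF Y i0 False] by simp
      qed
    qed
    then have Y0: "(\<chi> s. Y $ fst s $ snd s) = 0" using inj by blast
    have Yij: "Y$i$j = 0" for i j
    proof -
      have "(\<chi> s. Y $ fst s $ snd s) $ (i,j) = (0::'a^('n \<times> 'n)) $ (i,j)" by (simp only: Y0)
      then show ?thesis by simp
    qed
    have e: "X$i$j + - (X$z$z * (mat 1::'a^'n^'n)$i$j) = 0" for i j
      using Yij[of i j] by (simp add: Y_def smat_def)
    have h: "X$i$j = X$z$z * (mat 1::'a^'n^'n)$i$j" for i j
      using e[of i j] by simp
    show ?thesis unfolding vec_eq_iff smat_def by (simp only: vec_lambda_beta h[symmetric] simp_thms)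
  qed
  show ?thesis unfolding iso_to_field_def
  proof (intro exI conjI ballI allI)
    let ?\<phi> = "\<lambda>X::'a^'n^'n. X$z$z"
    show "bij_betw ?\<phi> ?S UNIV"
    proof (rule bij_betw_imageI)
      show "inj_on ?\<phi> ?S"
        by (rule inj_onI) (metis key)
      show "?\<phi> ` ?S = UNIV"
      proof (rule set_eqI, rule iffI)
        fix t :: 'a
        have "?\<phi> (smat t (mat 1)) = t" by (simp add: smat_def mat_def)
        then show "t \<in> ?\<phi> ` ?S" using I[of t] by (metis image_eqI)
      qed simp
    qed
    show "?\<phi> (X + Y) = ?\<phi> X + ?\<phi> Y" for X Y by simp
    show "?\<phi> (smat t X) = t * ?\<phi> X" for t X by (simp add: smat_def)
    fix X Y assume X: "X \<in> ?S" and Y: "Y \<in> ?S"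
    have "jprod X Y = jprod (smat (X$z$z) (mat 1)) (smat (Y$z$z) (mat 1))"
      using key[OF X] key[OF Y] by simp
    also have "\<dots> = smat (inverse 2) (smat (X$z$z * Y$z$z) (mat 1) + smat (Y$z$z * X$z$z) (mat 1))"
      by (simp add: jprod_alt smat_I_mult)
    finally show "?\<phi> (jprod X Y) = ?\<phi> X * ?\<phi> Y"
      using two by (simp add: smat_def mat_def field_simps)
  qed
qed

lemma good_Mgen:
  fixes z :: "'n::finite"
  assumes i0: "i0 < m" "3 \<le> d i0"
  shows "good (coeff_vars m d) (Mgen (hp i0) z $ r $ s :: (nat \<times> ('n \<Rightarrow>\<^sub>0 nat), 'a::comm_ring_1) mpoly)"
proof (cases "r = (z, z)")
  case True then show ?thesis by (simp add: Mgen_def good_0 good_1)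
next
  case False
  obtain a b \<beta> where t: "trip z r = (a, b, \<beta>)" by (cases "trip z r") auto
  have deg: "mdeg \<beta> \<le> 1" by (rule trip_mdeg[OF t])
  have g: "good (coeff_vars m d) (hp i0 a' k \<beta> :: (nat \<times> ('n \<Rightarrow>\<^sub>0 nat), 'a) mpoly)" for a' k
    unfolding hp_def
    by (rule good_single) (use deg i0 in \<open>auto simp: coeff_vars_def mdeg_add mdeg_single\<close>)
  show ?thesis using False t
    by (simp add: Mgen_def good_diff good_0 g)
qed

theorem theorem2p5:
  fixes m :: nat
  assumes char_not_2: "(2::'a::field) \<noteq> 0"
  shows "(\<forall>f :: nat \<Rightarrow> ('n::finite, 'a) mpoly.
            jordan_subalgebra (Zset m f) \<and> jordan_algebra_on (Zset m f))
       \<and> (\<forall>d :: nat \<Rightarrow> nat. (\<exists>i<m. 3 \<le> d i) \<longrightarrow>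
            (\<exists>P :: (nat \<times> ('n \<Rightarrow>\<^sub>0 nat), 'a) mpoly.
               P \<noteq> 0 \<and> (\<forall>\<mu>\<in>Poly_Mapping.keys P. Poly_Mapping.keys \<mu> \<subseteq> coeff_vars m d) \<and>
               (\<forall>c. meval P c \<noteq> 0 \<longrightarrow> iso_to_field (Zset m (polys_of_coeffs d c)))))"
proof (rule conjI)
  show "\<forall>f :: nat \<Rightarrow> ('n, 'a) mpoly. jordan_subalgebra (Zset m f) \<and> jordan_algebra_on (Zset m f)"
    using part1[OF char_not_2] by blast
next
  show "\<forall>d :: nat \<Rightarrow> nat. (\<exists>i<m. 3 \<le> d i) \<longrightarrow>
            (\<exists>P :: (nat \<times> ('n \<Rightarrow>\<^sub>0 nat), 'a) mpoly.
               P \<noteq> 0 \<and> (\<forall>\<mu>\<in>Poly_Mapping.keys P. Poly_Mapping.keys \<mu> \<subseteq> coeff_vars m d) \<and>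
               (\<forall>c. meval P c \<noteq> 0 \<longrightarrow> iso_to_field (Zset m (polys_of_coeffs d c))))"
  proof (intro allI impI)
  fix d :: "nat \<Rightarrow> nat"
  assume "\<exists>i<m. 3 \<le> d i"
  then obtain i0 where i0: "i0 < m" "3 \<le> d i0" by blast
  define z :: 'n where "z = undefined"
  define P :: "(nat \<times> ('n \<Rightarrow>\<^sub>0 nat), 'a) mpoly" where "P = det (Mgen (hp i0) z)"
  have mP: "meval P c = det (Mgen (hc i0 c) z)" for c
    unfolding P_def meval_det meval_Mgen ..
  show "\<exists>P :: (nat \<times> ('n \<Rightarrow>\<^sub>0 nat), 'a) mpoly.
               P \<noteq> 0 \<and> (\<forall>\<mu>\<in>Poly_Mapping.keys P. Poly_Mapping.keys \<mu> \<subseteq> coeff_vars m d) \<and>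
               (\<forall>c. meval P c \<noteq> 0 \<longrightarrow> iso_to_field (Zset m (polys_of_coeffs d c)))"
  proof (intro exI conjI allI impI)
    have "meval P (c0 z) \<noteq> 0"
      unfolding mP det_nz_iff using inj_c0[OF char_not_2] by blast
    then show "P \<noteq> 0" using meval_0 by metis
    have "good (coeff_vars m d) P" unfolding P_def
      by (rule good_det) (rule good_Mgen[of i0 m d, OF i0])
    then show "\<forall>\<mu>\<in>Poly_Mapping.keys P. Poly_Mapping.keys \<mu> \<subseteq> coeff_vars m d" by (simp add: good_def)
  next
    fix c assume "meval P c \<noteq> 0"
    then have "\<forall>x. Mgen (hc i0 c) z *v x = 0 \<longrightarrow> x = 0" unfolding mP det_nz_iff .
    then show "iso_to_field (Zset m (polys_of_coeffs d c))" by (rule part2_iso[where c = c and z = z and m = m and d = d, OF char_not_2 i0])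
  qed
  qed
qed

end
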